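(* Let $F_0,F_1$ be an affine pair of communicating SR-machines. If the protocol is deadlock-free, then it has the bounded channel property if and only if neither $F_0$ nor $F_1$ has a send cycle.
   Context: A pair of communicating SR-machines is a CFSM protocol with communication graph having nodes $\{0,1\}$ and two edges $\alpha$ (from $0$ to $1$) and $\beta$ (from $1$ to $0$), disjoint finite message alphabets $M_\alpha,M_\beta$, and two finite state machines $F_j=(K_j,\Sigma_j,T_j,h_j)$, $j=0,1$, with $\Sigma_0=\{-b:b\in M_\alpha\}\cup\{+b:b\in M_\beta\}$, $\Sigma_1=\{-b:b\in M_\beta\}\cup\{+b:b\in M_\alpha\}$, $K_j$ finite, $h_j\in K_j$ initial, $T_j\subseteq K_j\times\Sigma_j\times K_j$ (transitions written $p\xrightarrow{e}q$; $+b$ = receive, $-b$ = send; $p\xrightarrow{w}q$ for $w\in\Sigma_j^*$ means a directed path labelled $w$). A state is a send state if it has no outgoing $+b$ transition and a receive state if it has no outgoing $-b$ transition. $F_j$ is an SR-machine if every state is a send or a receive state, its transition diagram is strongly connected, and $p\xrightarrow{e}q_1$, $p\xrightarrow{e}q_2$ imply $q_1=q_2$. Global states are $((p_0,p_1),(x_\alpha,x_\beta))$; initially $((h_0,h_1),(\lambda,\lambda))$. A step is either a send (a machine performs $p\xrightarrow{-b}q$ and $b$ is appended to its output channel: $\alpha$ for $F_0$, $\beta$ for $F_1$) or a receive (a machine performs $p\xrightarrow{+b}q$ and $b$ is removed from the front of its input channel, $\beta$ for $F_0$, $\alpha$ for $F_1$, which must begin with $b$); the other machine is unchanged. Reachable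 means reachable from the initial global state. A global state is deadlocked if both components are receive states and both channels are empty; the protocol is deadlock-free if no deadlocked global state is reachable. It has the bounded channel property if $|x_\alpha|+|x_\beta|$ is bounded over all reachable global states. $\pi_\alpha(w)$ (resp. $\pi_\beta(w)$) is the string of symbols of $M_\alpha$ (resp. $M_\beta$) occurring in $w$, in order, signs removed; $\mathbf Z_j=\{(\pi_\alpha(w),\pi_\beta(w)): h_j\xrightarrow{w}h_j \text{ in } F_j\}$; the pair is affine if $\mathbf Z_0=\mathbf Z_1$. A send cycle of $F_j$ is a directed cycle in its transition diagram all of whose labels are of the form $-b$. *)

theory Defs
  imports Main
begin

datatype 'm act = Send 'm | Recv 'm

fun msg :: "'m act \<Rightarrow> 'm" where
  "msg (Send b) = b" | "msg (Recv b) = b"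

text \<open>A finite state machine (K, Sigma, T, h); Sigma is fixed by the role of the machine.\<close>
record ('s, 'm) fsm =
  states :: "'s set"
  trans  :: "('s \<times> 'm act \<times> 's) set"
  init   :: 's

inductive path :: "('s \<times> 'm act \<times> 's) set \<Rightarrow> 's \<Rightarrow> 'm act list \<Rightarrow> 's \<Rightarrow> bool"
  for T where
  path_nil:  "path T p [] p"
| path_cons: "(p, e, r) \<in> T \<Longrightarrow> path T r w q \<Longrightarrow> path T p (e # w) q"

definition send_state :: "('s, 'm) fsm \<Rightarrow> 's \<Rightarrow> bool" where
  "send_state F p \<longleftrightarrow> (\<nexists>b q. (p, Recv b, q) \<in> trans F)"

definition receive_state :: "('s, 'm) fsm \<Rightarrow> 's \<Rightarrow> bool" where
  "receive_state F p \<longleftrightarrow> (\<nexists>b q. (p, Send b, q) \<in> trans F)"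

definition alphabet :: "'m set \<Rightarrow> 'm set \<Rightarrow> 'm act set" where
  "alphabet Out In = Send ` Out \<union> Recv ` In"

definition is_fsm :: "'m set \<Rightarrow> 'm set \<Rightarrow> ('s, 'm) fsm \<Rightarrow> bool" where
  "is_fsm Out In F \<longleftrightarrow> finite (states F) \<and> init F \<in> states F \<and>
     trans F \<subseteq> states F \<times> alphabet Out In \<times> states F"

definition sr_machine :: "'m set \<Rightarrow> 'm set \<Rightarrow> ('s, 'm) fsm \<Rightarrow> bool" where
  "sr_machine Out In F \<longleftrightarrow> is_fsm Out In F \<and>
     (\<forall>p \<in> states F. send_state F p \<or> receive_state F p) \<and>
     (\<forall>p \<in> states F. \<forall>q \<in> states F. \<exists>w. path (trans F) p w q) \<and>
     (\<forall>p e q1 q2. (p, e, q1) \<in> trans F \<longrightarrow> (p, e, q2) \<in> trans F \<longrightarrow> q1 = q2)"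

definition sr_pair :: "'m set \<Rightarrow> 'm set \<Rightarrow> ('s0, 'm) fsm \<Rightarrow> ('s1, 'm) fsm \<Rightarrow> bool" where
  "sr_pair Ma Mb F0 F1 \<longleftrightarrow> finite Ma \<and> finite Mb \<and> Ma \<inter> Mb = {} \<and>
     sr_machine Ma Mb F0 \<and> sr_machine Mb Ma F1"

type_synonym ('s0, 's1, 'm) gstate = "('s0 \<times> 's1) \<times> ('m list \<times> 'm list)"

text \<open>One step of the protocol; channel alpha (first list) goes from F0 to F1,
  channel beta (second list) from F1 to F0.\<close>
inductive gstep :: "('s0, 'm) fsm \<Rightarrow> ('s1, 'm) fsm \<Rightarrow>
    ('s0, 's1, 'm) gstate \<Rightarrow> ('s0, 's1, 'm) gstate \<Rightarrow> bool"
  for F0 F1 where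
  send0: "(p0, Send b, q0) \<in> trans F0 \<Longrightarrow>
     gstep F0 F1 ((p0, p1), (xa, xb)) ((q0, p1), (xa @ [b], xb))"
| recv0: "(p0, Recv b, q0) \<in> trans F0 \<Longrightarrow>
     gstep F0 F1 ((p0, p1), (xa, b # xb)) ((q0, p1), (xa, xb))"
| send1: "(p1, Send b, q1) \<in> trans F1 \<Longrightarrow>
     gstep F0 F1 ((p0, p1), (xa, xb)) ((p0, q1), (xa, xb @ [b]))"
| recv1: "(p1, Recv b, q1) \<in> trans F1 \<Longrightarrow>
     gstep F0 F1 ((p0, p1), (b # xa, xb)) ((p0, q1), (xa, xb))"

definition initial_gstate :: "('s0, 'm) fsm \<Rightarrow> ('s1, 'm) fsm \<Rightarrow> ('s0, 's1, 'm) gstate" where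
  "initial_gstate F0 F1 = ((init F0, init F1), ([], []))"

definition reachable :: "('s0, 'm) fsm \<Rightarrow> ('s1, 'm) fsm \<Rightarrow> ('s0, 's1, 'm) gstate \<Rightarrow> bool" where
  "reachable F0 F1 g \<longleftrightarrow> (gstep F0 F1)\<^sup>*\<^sup>* (initial_gstate F0 F1) g"

definition deadlocked :: "('s0, 'm) fsm \<Rightarrow> ('s1, 'm) fsm \<Rightarrow> ('s0, 's1, 'm) gstate \<Rightarrow> bool" where
  "deadlocked F0 F1 g \<longleftrightarrow> (case g of ((p0, p1), (xa, xb)) \<Rightarrow>
     receive_state F0 p0 \<and> receive_state F1 p1 \<and> xa = [] \<and> xb = [])"

definition deadlock_free :: "('s0, 'm) fsm \<Rightarrow> ('s1, 'm) fsm \<Rightarrow> bool" where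
  "deadlock_free F0 F1 \<longleftrightarrow> (\<forall>g. reachable F0 F1 g \<longrightarrow> \<not> deadlocked F0 F1 g)"

definition bounded_channel :: "('s0, 'm) fsm \<Rightarrow> ('s1, 'm) fsm \<Rightarrow> bool" where
  "bounded_channel F0 F1 \<longleftrightarrow> (\<exists>B::nat. \<forall>p xa xb. reachable F0 F1 (p, (xa, xb)) \<longrightarrow>
     length xa + length xb \<le> B)"

definition proj :: "'m set \<Rightarrow> 'm act list \<Rightarrow> 'm list" where
  "proj M w = map msg (filter (\<lambda>e. msg e \<in> M) w)"

definition Zset :: "'m set \<Rightarrow> 'm set \<Rightarrow> ('s, 'm) fsm \<Rightarrow> ('m list \<times> 'm list) set" where
  "Zset Ma Mb F = {(proj Ma w, proj Mb w) | w. path (trans F) (init F) w (init F)}"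

definition affine :: "'m set \<Rightarrow> 'm set \<Rightarrow> ('s0, 'm) fsm \<Rightarrow> ('s1, 'm) fsm \<Rightarrow> bool" where
  "affine Ma Mb F0 F1 \<longleftrightarrow> Zset Ma Mb F0 = Zset Ma Mb F1"

definition has_send_cycle :: "('s, 'm) fsm \<Rightarrow> bool" where
  "has_send_cycle F \<longleftrightarrow> (\<exists>p w. w \<noteq> [] \<and> path (trans F) p w p \<and>
     (\<forall>e \<in> set w. \<exists>b. e = Send b))"

end

theory Submission
  imports Defs
begin


lemma path_Nil_iff: "path T p [] q \<longleftrightarrow> p = q"
  by (auto elim: path.cases intro: path.intros)

lemma path_Cons_iff: "path T p (e # w) q \<longleftrightarrow> (\<exists>r. (p, e, r) \<in> T \<and> path T r w q)"
  by (auto elim: path.cases intro: path.intros)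

lemma path_append_iff: "path T p (u @ v) q \<longleftrightarrow> (\<exists>r. path T p u r \<and> path T r v q)"
  by (induction u arbitrary: p) (auto simp: path_Nil_iff path_Cons_iff)

lemma path_snoc: "path T p u r \<Longrightarrow> (r, e, q) \<in> T \<Longrightarrow> path T p (u @ [e]) q"
  by (auto simp: path_append_iff path_Cons_iff path_Nil_iff)

lemma path_rep: "path T p v p \<Longrightarrow> path T p (concat (replicate n v)) p"
  by (induction n) (auto simp: path_append_iff path_Nil_iff)

lemma path_labels: "path T p w q \<Longrightarrow> T \<subseteq> K \<times> S \<times> K \<Longrightarrow> set w \<subseteq> S"
  by (induction rule: path.induct) auto

lemma path_end: "path T p w q \<Longrightarrow> T \<subseteq> K \<times> S \<times> K \<Longrightarrow> p \<in> K \<Longrightarrow> q \<in> K"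
  by (induction rule: path.induct) auto

lemma path_src: "path T p w q \<Longrightarrow> w \<noteq> [] \<Longrightarrow> T \<subseteq> K \<times> S \<times> K \<Longrightarrow> p \<in> K"
  by (induction rule: path.induct) auto

lemma proj_Nil[simp]: "proj M [] = []"
  by (simp add: proj_def)

lemma proj_Cons[simp]: "proj M (e # w) = (if msg e \<in> M then msg e # proj M w else proj M w)"
  by (simp add: proj_def)

lemma proj_append[simp]: "proj M (u @ v) = proj M u @ proj M v"
  by (simp add: proj_def)

lemma proj_out: "set w \<subseteq> alphabet Out In \<Longrightarrow> Out \<inter> In = {} \<Longrightarrow>
   proj Out w = map msg (filter (\<lambda>e. \<exists>b. e = Send b) w)"
  by (induction w) (auto simp: alphabet_def)

lemma proj_in: "set w \<subseteq> alphabet Out In \<Longrightarrow> Out \<inter> In = {} \<Longrightarrow>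
   proj In w = map msg (filter (\<lambda>e. \<exists>b. e = Recv b) w)"
  by (induction w) (auto simp: alphabet_def)

lemma not_recv_iff: "(\<lambda>e. \<not> (\<exists>b. e = Recv b)) = (\<lambda>e. \<exists>b. e = Send b)"
  by (rule ext) (metis act.exhaust act.distinct(1))

lemma not_send_iff: "(\<lambda>e. \<not> (\<exists>b. e = Send b)) = (\<lambda>e. \<exists>b. e = Recv b)"
  by (rule ext) (metis act.exhaust act.distinct(1))

lemma pathP_distinct:
  assumes "path T p w q" "T \<subseteq> K \<times> S \<times> K" "p \<in> K" "\<forall>e\<in>set w. P e"
    "\<not>(\<exists>r v. v \<noteq> [] \<and> path T r v r \<and> (\<forall>e\<in>set v. P e))"
  shows "\<exists>ss. distinct ss \<and> length ss = Suc (length w) \<and> set ss \<subseteq> K \<and>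
     (\<forall>s\<in>set ss. \<exists>u. path T p u s \<and> (\<forall>e\<in>set u. P e))"
  using assms
proof (induction rule: path.induct)
  case (path_nil p)
  then show ?case by (intro exI[of _ "[p]"]) (auto intro: path.intros)
next
  case (path_cons p e r w q)
  have "r \<in> K" using path_cons.hyps(1) path_cons.prems(1) by auto
  then obtain ss where ss: "distinct ss" "length ss = Suc (length w)" "set ss \<subseteq> K"
     "\<forall>s\<in>set ss. \<exists>u. path T r u s \<and> (\<forall>e\<in>set u. P e)"
    using path_cons.IH path_cons.prems by auto
  have "p \<notin> set ss"
  proof
    assume "p \<in> set ss"
    then obtain u where u: "path T r u p" "\<forall>e\<in>set u. P e" using ss(4) by blast
    have "path T p (e#u) p" by (rule path.path_cons[OF path_cons.hyps(1) u(1)])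
    moreover have "\<forall>x\<in>set (e#u). P x" using path_cons.prems(3) u(2) by auto
    ultimately show False using path_cons.prems(4) by blast
  qed
  have "\<forall>s\<in>set (p # ss). \<exists>u. path T p u s \<and> (\<forall>e\<in>set u. P e)"
  proof
    fix s assume "s \<in> set (p # ss)"
    then have "s = p \<or> s \<in> set ss" by simp
    then show "\<exists>u. path T p u s \<and> (\<forall>e\<in>set u. P e)"
    proof
      assume "s = p" then show ?thesis by (intro exI[of _ "[]"]) (auto intro: path.intros)
    next
      assume "s \<in> set ss"
      then obtain u where u: "path T r u s" "\<forall>e\<in>set u. P e" using ss(4) by blast
      show ?thesis
        by (rule exI[of _ "e # u"]) (use path_cons.hyps(1) u path_cons.prems in \<open>auto intro: path.intros\<close>)
    qed
  qed
  then show ?case using ss \<open>p \<notin> set ss\<close> path_cons.prems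
    by (intro exI[of _ "p # ss"]) auto
qed

lemma pathP_short:
  assumes "finite K" "path T p w q" "T \<subseteq> K \<times> S \<times> K" "p \<in> K" "\<forall>e\<in>set w. P e"
    "\<not>(\<exists>r v. v \<noteq> [] \<and> path T r v r \<and> (\<forall>e\<in>set v. P e))"
  shows "length w < card K"
proof -
  obtain ss where ss: "distinct ss" "length ss = Suc (length w)" "set ss \<subseteq> K"
    using pathP_distinct[OF assms(2-6)] by blast
  have "card (set ss) \<le> card K" using ss(3) assms(1) by (rule card_mono[rotated])
  then show ?thesis using distinct_card[OF ss(1)] ss(2) by simp
qed

lemma count_bound:
  assumes K: "finite K" and T: "T \<subseteq> K \<times> S \<times> K"
    and nc: "\<not>(\<exists>r v. v \<noteq> [] \<and> path T r v r \<and> (\<forall>e\<in>set v. P e))"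
  shows "path T p w q \<Longrightarrow> p \<in> K \<Longrightarrow>
     length (filter P w) \<le> card K * (length (filter (\<lambda>e. \<not> P e) w) + 1)"
proof (induction "length w" arbitrary: p w rule: less_induct)
  case less
  define u where "u = takeWhile P w"
  define v where "v = dropWhile P w"
  have w: "w = u @ v" by (simp add: u_def v_def)
  from less.prems(1) obtain r where pu: "path T p u r" and pv: "path T r v q"
    using w path_append_iff by metis
  have uP: "\<forall>e\<in>set u. P e" by (simp add: u_def) (meson set_takeWhileD)
  have ul: "length u < card K" by (rule pathP_short[OF K pu T less.prems(2) uP nc])
  have fu: "filter P u = u" using uP by (simp add: filter_id_conv)
  have fu2: "filter (\<lambda>e. \<not> P e) u = []" using uP by (simp add: filter_empty_conv)
  show ?case
  proof (cases v)
    case Nil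
    then show ?thesis using w fu ul by simp
  next
    case (Cons e v')
    have "\<not> P e" using Cons v_def hd_dropWhile[of P w] by auto
    from pv Cons obtain r' where "(r,e,r') \<in> T" and pv': "path T r' v' q"
      by (auto simp: path_Cons_iff)
    then have "r' \<in> K" using T by auto
    have "length v' < length w" using w Cons by simp
    then have IH: "length (filter P v') \<le> card K * (length (filter (\<lambda>e. \<not> P e) v') + 1)"
      using less.hyps pv' \<open>r' \<in> K\<close> by blast
    have "length (filter P w) = length u + length (filter P v')"
      using w Cons fu \<open>\<not> P e\<close> by simp
    moreover have "length (filter (\<lambda>e. \<not> P e) w) = Suc (length (filter (\<lambda>e. \<not> P e) v'))"
      using w Cons fu2 \<open>\<not> P e\<close> by simp
    ultimately show ?thesis using IH ul by simp
  qed
qed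



lemma sr_trans: "sr_machine Out In F \<Longrightarrow> trans F \<subseteq> states F \<times> alphabet Out In \<times> states F"
  by (simp add: sr_machine_def is_fsm_def)

lemma sr_det: "sr_machine Out In F \<Longrightarrow> (p, e, q1) \<in> trans F \<Longrightarrow> (p, e, q2) \<in> trans F \<Longrightarrow> q1 = q2"
  by (simp add: sr_machine_def)

lemma sr_sr: "sr_machine Out In F \<Longrightarrow> p \<in> states F \<Longrightarrow> send_state F p \<or> receive_state F p"
  by (simp add: sr_machine_def)

lemma sr_conn: "sr_machine Out In F \<Longrightarrow> p \<in> states F \<Longrightarrow> q \<in> states F \<Longrightarrow> \<exists>w. path (trans F) p w q"
  by (simp add: sr_machine_def)

lemma sr_init: "sr_machine Out In F \<Longrightarrow> init F \<in> states F"
  by (simp add: sr_machine_def is_fsm_def)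

lemma sr_finite: "sr_machine Out In F \<Longrightarrow> finite (states F)"
  by (simp add: sr_machine_def is_fsm_def)

lemma div_lemma:
  assumes sr: "sr_machine Out In F" and disj: "Out \<inter> In = {}"
  shows "path (trans F) h u p \<Longrightarrow> path (trans F) h z qz \<Longrightarrow>
    proj In u @ s = proj In z \<Longrightarrow> R @ t1 = proj Out u \<Longrightarrow> R @ t2 = proj Out z \<Longrightarrow>
    \<exists>c d. z = c @ d \<and> length (proj In c) \<le> length (proj In u) \<and> length R \<le> length (proj Out c)"
proof (induction arbitrary: z qz s R t1 t2 rule: path.induct)
  case (path_nil h)
  then show ?case by (intro exI[of _ "[]"] exI[of _ z]) auto
next
  case (path_cons h e r w p)
  have Tsub: "trans F \<subseteq> states F \<times> alphabet Out In \<times> states F" by (rule sr_trans[OF sr])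
  have hK: "h \<in> states F" and eA: "e \<in> alphabet Out In" using path_cons.hyps(1) Tsub by auto
  show ?case
  proof (cases z)
    case Nil
    then show ?thesis using path_cons.prems by (intro exI[of _ "[]"]) auto
  next
    case (Cons e' z')
    with path_cons.prems(1) obtain r' where tr': "(h, e', r') \<in> trans F" and pz': "path (trans F) r' z' qz"
      by (auto simp: path_Cons_iff)
    have e'A: "e' \<in> alphabet Out In" using tr' Tsub by auto
    show ?thesis
    proof (cases "e' = e")
      case True
      then have "r' = r" using sr_det[OF sr tr'] path_cons.hyps(1) by simp
      show ?thesis
      proof (cases e)
        case (Send b)
        then have b: "b \<in> Out" "b \<notin> In" using eA disj by (auto simp: alphabet_def)
        have pI: "proj In w @ s = proj In z'" using path_cons.prems(2) Cons True Send b by simp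
        have "\<exists>t1' t2'. tl R @ t1' = proj Out w \<and> tl R @ t2' = proj Out z' \<and> length R \<le> Suc (length (tl R))"
        proof (cases R)
          case Nil then show ?thesis by auto
        next
          case (Cons x R')
          then show ?thesis using path_cons.prems(3,4) \<open>z = e' # z'\<close> True Send b by auto
        qed
        then obtain t1' t2' where t: "tl R @ t1' = proj Out w" "tl R @ t2' = proj Out z'"
          and lR: "length R \<le> Suc (length (tl R))" by blast
        obtain c d where cd: "z' = c @ d" "length (proj In c) \<le> length (proj In w)"
           "length (tl R) \<le> length (proj Out c)"
          using path_cons.IH[OF pz'[unfolded \<open>r' = r\<close>] pI t] by blast
        show ?thesis
          by (rule exI[of _ "e # c"], rule exI[of _ d]) (use cd Cons True Send b lR in auto)
      next
        case (Recv a)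
        then have a: "a \<in> In" "a \<notin> Out" using eA disj by (auto simp: alphabet_def)
        have pI: "proj In w @ s = proj In z'" using path_cons.prems(2) Cons True Recv a by simp
        have t: "R @ t1 = proj Out w" "R @ t2 = proj Out z'"
          using path_cons.prems(3,4) Cons True Recv a by auto
        obtain c d where cd: "z' = c @ d" "length (proj In c) \<le> length (proj In w)"
           "length R \<le> length (proj Out c)"
          using path_cons.IH[OF pz'[unfolded \<open>r' = r\<close>] pI t] by blast
        show ?thesis
          by (rule exI[of _ "e # c"], rule exI[of _ d]) (use cd Cons True Recv a in auto)
      qed
    next
      case False
      show ?thesis
      proof (cases e)
        case (Send b)
        then have "\<not> receive_state F h" using path_cons.hyps(1) by (auto simp: receive_state_def)
        then have "send_state F h" using sr_sr[OF sr hK] by auto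
        then obtain b' where e': "e' = Send b'" using tr' by (cases e') (auto simp: send_state_def)
        have "R = []"
        proof (rule ccontr)
          assume "R \<noteq> []"
          then obtain x R' where "R = x # R'" by (cases R) auto
          moreover have "b \<in> Out" "b' \<in> Out" using eA e'A Send e' by (auto simp: alphabet_def)
          ultimately show False using path_cons.prems(3,4) Cons Send e' False by auto
        qed
        then show ?thesis by (intro exI[of _ "[]"] exI[of _ z]) auto
      next
        case (Recv a)
        then have "\<not> send_state F h" using path_cons.hyps(1) by (auto simp: send_state_def)
        then have "receive_state F h" using sr_sr[OF sr hK] by auto
        then obtain a' where e': "e' = Recv a'" using tr' by (cases e') (auto simp: receive_state_def)
        have "a \<in> In" "a' \<in> In" using eA e'A Recv e' by (auto simp: alphabet_def)
        then show ?thesis using path_cons.prems(2) Cons Recv e' False by auto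
      qed
    qed
  qed
qed

lemma no_recv_cycle:
  assumes srA: "sr_machine MX MY A" and srB: "sr_machine MY MX B" and disj: "MX \<inter> MY = {}"
    and ZBA: "\<And>w. path (trans B) (init B) w (init B) \<Longrightarrow>
        \<exists>z. path (trans A) (init A) z (init A) \<and> proj MX z = proj MX w \<and> proj MY z = proj MY w"
    and nsc: "\<not> has_send_cycle A"
  shows "\<not>(\<exists>r v. v \<noteq> [] \<and> path (trans B) r v r \<and> (\<forall>e\<in>set v. \<exists>b. e = Recv b))"
proof
  assume "\<exists>r v. v \<noteq> [] \<and> path (trans B) r v r \<and> (\<forall>e\<in>set v. \<exists>b. e = Recv b)"
  then obtain r v where v: "v \<noteq> []" "path (trans B) r v r" "\<forall>e\<in>set v. \<exists>b. e = Recv b" by blast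
  have TB: "trans B \<subseteq> states B \<times> alphabet MY MX \<times> states B" by (rule sr_trans[OF srB])
  have TA: "trans A \<subseteq> states A \<times> alphabet MX MY \<times> states A" by (rule sr_trans[OF srA])
  have rK: "r \<in> states B" using path_src[OF v(2) v(1) TB] .
  obtain x where px: "path (trans B) (init B) x r" using sr_conn[OF srB sr_init[OF srB] rK] by blast
  obtain y where py: "path (trans B) r y (init B)" using sr_conn[OF srB rK sr_init[OF srB]] by blast
  define m where "m = length (proj MY x) + length (proj MY y)"
  define n where "n = card (states A) * (m + 1) + 1"
  define w where "w = x @ concat (replicate n v) @ y"
  have pw: "path (trans B) (init B) w (init B)"
    unfolding w_def using px py path_rep[OF v(2)] by (auto simp: path_append_iff)
  have vA: "set v \<subseteq> alphabet MY MX" using path_labels[OF v(2) TB] .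
  have disj': "MY \<inter> MX = {}" using disj by blast
  have fv: "filter (\<lambda>e. \<exists>b. e = Send b) v = []" using v(3)
    by (auto simp: filter_empty_conv)
  have pv1: "proj MY v = []" using proj_out[OF vA disj'] fv by simp
  have pv2: "length (proj MX v) = length v" using proj_in[OF vA disj'] v(3)
    by (simp add: filter_id_conv)
  have rep1: "\<And>k. proj MY (concat (replicate k v)) = []" 
  proof -
    fix k show "proj MY (concat (replicate k v)) = []" by (induction k) (auto simp: pv1)
  qed
  have rep2: "\<And>k. length (proj MX (concat (replicate k v))) = k * length v"
  proof -
    fix k show "length (proj MX (concat (replicate k v))) = k * length v" by (induction k) (auto simp: pv2)
  qed
  obtain z where z: "path (trans A) (init A) z (init A)" "proj MX z = proj MX w" "proj MY z = proj MY w"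
    using ZBA[OF pw] by blast
  have zA: "set z \<subseteq> alphabet MX MY" using path_labels[OF z(1) TA] .
  have nc: "\<not>(\<exists>r v. v \<noteq> [] \<and> path (trans A) r v r \<and> (\<forall>e\<in>set v. \<exists>b. e = Send b))"
    using nsc by (simp add: has_send_cycle_def)
  have cb: "length (filter (\<lambda>e. \<exists>b. e = Send b) z) \<le> card (states A) * (length (filter (\<lambda>e. \<not> (\<exists>b. e = Send b)) z) + 1)"
    by (rule count_bound[OF sr_finite[OF srA] TA nc z(1) sr_init[OF srA]])
  have "length (filter (\<lambda>e. \<exists>b. e = Send b) z) = length (proj MX z)"
    using proj_out[OF zA disj] by simp
  also have "\<dots> \<ge> n" using z(2) rep2[of n] v(1) unfolding w_def
    by simp (metis One_nat_def Suc_leI length_greater_0_conv mult.right_neutral mult_le_mono2 trans_le_add1 le_add2 add.commute)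
  finally have n1: "n \<le> length (filter (\<lambda>e. \<exists>b. e = Send b) z)" .
  have "length (filter (\<lambda>e. \<not> (\<exists>b. e = Send b)) z) = length (proj MY z)"
    unfolding not_send_iff using proj_in[OF zA disj] by simp
  also have "\<dots> = m" using z(3) rep1[of n] unfolding w_def m_def by simp
  finally show False using cb n1 unfolding n_def by simp
qed



lemma lag_bound:
  assumes srA: "sr_machine MX MY A" and srB: "sr_machine MY MX B" and disj: "MX \<inter> MY = {}"
    and ZAB: "\<And>w. path (trans A) (init A) w (init A) \<Longrightarrow>
        \<exists>z. path (trans B) (init B) z (init B) \<and> proj MX z = proj MX w \<and> proj MY z = proj MY w"
    and ZBA: "\<And>w. path (trans B) (init B) w (init B) \<Longrightarrow>
        \<exists>z. path (trans A) (init A) z (init A) \<and> proj MX z = proj MX w \<and> proj MY z = proj MY w"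
    and nsc: "\<not> has_send_cycle A"
  shows "\<exists>C. \<forall>uA pA uB pB x y. path (trans A) (init A) uA pA \<longrightarrow> path (trans B) (init B) uB pB \<longrightarrow>
     proj MX uA = proj MX uB @ x \<longrightarrow> proj MY uB = proj MY uA @ y \<longrightarrow> length x \<le> C"
proof -
  have TB: "trans B \<subseteq> states B \<times> alphabet MY MX \<times> states B" by (rule sr_trans[OF srB])
  have TA: "trans A \<subseteq> states A \<times> alphabet MX MY \<times> states A" by (rule sr_trans[OF srA])
  have disj': "MY \<inter> MX = {}" using disj by blast
  have nrc: "\<not>(\<exists>r v. v \<noteq> [] \<and> path (trans B) r v r \<and> (\<forall>e\<in>set v. \<exists>b. e = Recv b))"
    by (rule no_recv_cycle[OF srA srB disj ZBA nsc])
  have "\<forall>p\<in>states A. \<exists>v. path (trans A) p v (init A)"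
    using sr_conn[OF srA _ sr_init[OF srA]] by blast
  then obtain f where f: "\<And>p. p \<in> states A \<Longrightarrow> path (trans A) p (f p) (init A)" by metis
  define BA where "BA = Max ((\<lambda>p. length (f p)) ` states A)"
  have fB: "\<And>p. p \<in> states A \<Longrightarrow> length (f p) \<le> BA"
    unfolding BA_def using sr_finite[OF srA] by (intro Max_ge) auto
  show ?thesis
  proof (intro exI[of _ "card (states B) * (BA + 1)"] allI impI)
    fix uA pA uB pB x y
    assume uA: "path (trans A) (init A) uA pA" and uB: "path (trans B) (init B) uB pB"
      and hx: "proj MX uA = proj MX uB @ x" and hy: "proj MY uB = proj MY uA @ y"
    have pAK: "pA \<in> states A" using path_end[OF uA TA sr_init[OF srA]] .
    define v0 where "v0 = f pA"
    have pv0: "path (trans A) pA v0 (init A)" using f[OF pAK] v0_def by simp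
    have lv0: "length v0 \<le> BA" using fB[OF pAK] v0_def by simp
    have "path (trans A) (init A) (uA @ v0) (init A)" using uA pv0 by (auto simp: path_append_iff)
    then obtain z where z: "path (trans B) (init B) z (init B)" "proj MX z = proj MX (uA @ v0)"
       "proj MY z = proj MY (uA @ v0)" using ZAB by blast
    have e1: "proj MX uB @ (x @ proj MX v0) = proj MX z" using z(2) hx by simp
    have e2: "proj MY uA @ y = proj MY uB" using hy by simp
    have e3: "proj MY uA @ proj MY v0 = proj MY z" using z(3) by simp
    obtain c d where cd: "z = c @ d" "length (proj MX c) \<le> length (proj MX uB)"
        "length (proj MY uA) \<le> length (proj MY c)"
      using div_lemma[OF srB disj' uB z(1) e1 e2 e3] by blast
    from z(1) cd(1) obtain r where pc: "path (trans B) (init B) c r" and pd: "path (trans B) r d (init B)"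
      by (auto simp: path_append_iff)
    have rK: "r \<in> states B" using path_end[OF pc TB sr_init[OF srB]] .
    have dA: "set d \<subseteq> alphabet MY MX" using path_labels[OF pd TB] .
    have cb: "length (filter (\<lambda>e. \<exists>b. e = Recv b) d) \<le> card (states B) * (length (filter (\<lambda>e. \<not> (\<exists>b. e = Recv b)) d) + 1)"
      by (rule count_bound[OF sr_finite[OF srB] TB nrc pd rK])
    have l1: "length (filter (\<lambda>e. \<exists>b. e = Recv b) d) = length (proj MX d)"
      using proj_in[OF dA disj'] by simp
    have l2: "length (filter (\<lambda>e. \<not> (\<exists>b. e = Recv b)) d) = length (proj MY d)"
      unfolding not_recv_iff using proj_out[OF dA disj'] by simp
    have "length (proj MX z) = length (proj MX uB) + length x + length (proj MX v0)"
      using e1 by (metis length_append add.assoc)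
    then have "length x \<le> length (proj MX d)" using cd(1,2) by simp
    moreover have "length (proj MY d) \<le> BA"
    proof -
      have "length (proj MY z) = length (proj MY uA) + length (proj MY v0)"
        using e3 by (metis length_append)
      moreover have "length (proj MY v0) \<le> length v0" by (simp add: proj_def)
      ultimately show ?thesis using cd(1,3) lv0 by simp
    qed
    ultimately show "length x \<le> card (states B) * (BA + 1)"
    proof -
      assume a1: "length x \<le> length (proj MX d)" and a2: "length (proj MY d) \<le> BA"
      have "card (states B) * (length (proj MY d) + 1) \<le> card (states B) * (BA + 1)"
        using a2 by simp
      moreover have "length (proj MX d) \<le> card (states B) * (length (proj MY d) + 1)"
        using cb unfolding l1 l2 .
      ultimately show ?thesis using a1 by linarith
    qed
  qed
qed



lemma reach_init: "reachable F0 F1 ((init F0, init F1), ([], []))"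
  by (simp add: reachable_def initial_gstate_def)

lemma reach_step: "reachable F0 F1 g \<Longrightarrow> gstep F0 F1 g g' \<Longrightarrow> reachable F0 F1 g'"
  by (auto simp: reachable_def)

lemma reach_steps: "reachable F0 F1 g \<Longrightarrow> (gstep F0 F1)\<^sup>*\<^sup>* g g' \<Longrightarrow> reachable F0 F1 g'"
  by (auto simp: reachable_def)

lemma hist:
  assumes sp: "sr_pair Ma Mb F0 F1"
  shows "reachable F0 F1 g \<Longrightarrow> (case g of ((p0, p1), (xa, xb)) \<Rightarrow>
     \<exists>u0 u1. path (trans F0) (init F0) u0 p0 \<and> path (trans F1) (init F1) u1 p1 \<and>
       proj Ma u0 = proj Ma u1 @ xa \<and> proj Mb u1 = proj Mb u0 @ xb)"
  unfolding reachable_def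
proof (induction rule: rtranclp_induct)
  case base
  then show ?case by (auto simp: initial_gstate_def intro!: exI[of _ "[]"] path.intros)
next
  case (step y z)
  have sr0: "sr_machine Ma Mb F0" and sr1: "sr_machine Mb Ma F1" and disj: "Ma \<inter> Mb = {}"
    using sp by (auto simp: sr_pair_def)
  have T0: "trans F0 \<subseteq> states F0 \<times> alphabet Ma Mb \<times> states F0" by (rule sr_trans[OF sr0])
  have T1: "trans F1 \<subseteq> states F1 \<times> alphabet Mb Ma \<times> states F1" by (rule sr_trans[OF sr1])
  from step.hyps(2) show ?case
  proof cases
    case (send0 p0 b q0 p1 xa xb)
    then have "b \<in> Ma" "b \<notin> Mb" using T0 disj by (auto simp: alphabet_def)
    moreover obtain u0 u1 where "path (trans F0) (init F0) u0 p0" "path (trans F1) (init F1) u1 p1"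
       "proj Ma u0 = proj Ma u1 @ xa" "proj Mb u1 = proj Mb u0 @ xb" using step.IH send0 by auto
    ultimately have P: "path (trans F0) (init F0) (u0 @ [Send b]) q0"
       "path (trans F1) (init F1) u1 p1"
       "proj Ma (u0 @ [Send b]) = proj Ma u1 @ (xa @ [b])"
       "proj Mb u1 = proj Mb (u0 @ [Send b]) @ xb"
       using send0 by (auto intro: path_snoc)
    show ?thesis using P by (simp only: send0(2) prod.case) blast
  next
    case (recv0 p0 b q0 p1 xa xb)
    then have "b \<in> Mb" "b \<notin> Ma" using T0 disj by (auto simp: alphabet_def)
    moreover obtain u0 u1 where "path (trans F0) (init F0) u0 p0" "path (trans F1) (init F1) u1 p1"
       "proj Ma u0 = proj Ma u1 @ xa" "proj Mb u1 = proj Mb u0 @ b # xb" using step.IH recv0 by auto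
    ultimately have P: "path (trans F0) (init F0) (u0 @ [Recv b]) q0"
       "path (trans F1) (init F1) u1 p1"
       "proj Ma (u0 @ [Recv b]) = proj Ma u1 @ xa"
       "proj Mb u1 = proj Mb (u0 @ [Recv b]) @ xb"
       using recv0 by (auto intro: path_snoc)
    show ?thesis using P by (simp only: recv0(2) prod.case) blast
  next
    case (send1 p1 b q1 p0 xa xb)
    then have "b \<in> Mb" "b \<notin> Ma" using T1 disj by (auto simp: alphabet_def)
    moreover obtain u0 u1 where "path (trans F0) (init F0) u0 p0" "path (trans F1) (init F1) u1 p1"
       "proj Ma u0 = proj Ma u1 @ xa" "proj Mb u1 = proj Mb u0 @ xb" using step.IH send1 by auto
    ultimately have P: "path (trans F0) (init F0) u0 p0"
       "path (trans F1) (init F1) (u1 @ [Send b]) q1"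
       "proj Ma u0 = proj Ma (u1 @ [Send b]) @ xa"
       "proj Mb (u1 @ [Send b]) = proj Mb u0 @ (xb @ [b])"
       using send1 by (auto intro: path_snoc)
    show ?thesis using P by (simp only: send1(2) prod.case) blast
  next
    case (recv1 p1 b q1 p0 xa xb)
    then have "b \<in> Ma" "b \<notin> Mb" using T1 disj by (auto simp: alphabet_def)
    moreover obtain u0 u1 where "path (trans F0) (init F0) u0 p0" "path (trans F1) (init F1) u1 p1"
       "proj Ma u0 = proj Ma u1 @ b # xa" "proj Mb u1 = proj Mb u0 @ xb" using step.IH recv1 by auto
    ultimately have P: "path (trans F0) (init F0) u0 p0"
       "path (trans F1) (init F1) (u1 @ [Recv b]) q1"
       "proj Ma u0 = proj Ma (u1 @ [Recv b]) @ xa"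
       "proj Mb (u1 @ [Recv b]) = proj Mb u0 @ xb"
       using recv1 by (auto intro: path_snoc)
    show ?thesis using P by (simp only: recv1(2) prod.case) blast
  qed
qed



lemma concl_step:
  assumes "\<forall>u v r. w = u @ v \<longrightarrow> path T p' u r \<longrightarrow> Q r" "Q p" "(p, e, p') \<in> T"
    "\<forall>p e q1 q2. (p, e, q1) \<in> T \<longrightarrow> (p, e, q2) \<in> T \<longrightarrow> q1 = q2"
  shows "\<forall>u v r. e # w = u @ v \<longrightarrow> path T p u r \<longrightarrow> Q r"
proof (intro allI impI)
  fix u v r assume h: "e # w = u @ v" "path T p u r"
  show "Q r"
  proof (cases u)
    case Nil then show ?thesis using h assms(2) by (simp add: path_Nil_iff)
  next
    case (Cons e' u')
    then have ee: "e' = e" "w = u' @ v" using h(1) by auto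
    from h(2) Cons obtain r'' where "(p, e', r'') \<in> T" "path T r'' u' r" by (auto simp: path_Cons_iff)
    moreover have "r'' = p'" using assms(3,4) ee(1) calculation(1) by metis
    ultimately show ?thesis using assms(1) ee(2) by blast
  qed
qed

lemma concl_base: "Q p \<Longrightarrow> \<forall>u v r. [] = u @ v \<longrightarrow> path T p u r \<longrightarrow> Q r"
  by (simp add: path_Nil_iff)

lemma coexec:
  assumes sp: "sr_pair Ma Mb F0 F1" and df: "deadlock_free F0 F1"
  shows "reachable F0 F1 ((p0, p1), (xa, xb)) \<Longrightarrow> path (trans F0) p0 w0 q0 \<Longrightarrow> path (trans F1) p1 w1 q1 \<Longrightarrow>
    xa @ proj Ma w0 = proj Ma w1 \<Longrightarrow> xb @ proj Mb w1 = proj Mb w0 \<Longrightarrow>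
    (\<forall>u v r. w0 = u @ v \<longrightarrow> path (trans F0) p0 u r \<longrightarrow> (\<exists>g. reachable F0 F1 g \<and> fst (fst g) = r)) \<and>
    (\<forall>u v r. w1 = u @ v \<longrightarrow> path (trans F1) p1 u r \<longrightarrow> (\<exists>g. reachable F0 F1 g \<and> snd (fst g) = r))"
proof (induction "length w0 + length w1" arbitrary: p0 p1 xa xb w0 w1 rule: less_induct)
  case less
  have sr0: "sr_machine Ma Mb F0" and sr1: "sr_machine Mb Ma F1" and disj: "Ma \<inter> Mb = {}"
    using sp by (auto simp: sr_pair_def)
  have T0: "trans F0 \<subseteq> states F0 \<times> alphabet Ma Mb \<times> states F0" by (rule sr_trans[OF sr0])
  have T1: "trans F1 \<subseteq> states F1 \<times> alphabet Mb Ma \<times> states F1" by (rule sr_trans[OF sr1])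
  note R = less.prems(1)
  have Q0: "\<exists>g. reachable F0 F1 g \<and> fst (fst g) = p0" using R by auto
  have Q1: "\<exists>g. reachable F0 F1 g \<and> snd (fst g) = p1" using R by auto
  show ?case
  proof (cases "\<exists>a w0'. w0 = Send a # w0'")
    case True
    then obtain a w0' where w0: "w0 = Send a # w0'" by blast
    from less.prems(2) w0 obtain p0' where tr: "(p0, Send a, p0') \<in> trans F0" and pw: "path (trans F0) p0' w0' q0"
      by (auto simp: path_Cons_iff)
    have a: "a \<in> Ma" "a \<notin> Mb" using tr T0 disj by (auto simp: alphabet_def)
    have R': "reachable F0 F1 ((p0', p1), (xa @ [a], xb))" by (rule reach_step[OF R gstep.send0[OF tr]])
    have IH: "(\<forall>u v r. w0' = u @ v \<longrightarrow> path (trans F0) p0' u r \<longrightarrow> (\<exists>g. reachable F0 F1 g \<and> fst (fst g) = r)) \<and>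
    (\<forall>u v r. w1 = u @ v \<longrightarrow> path (trans F1) p1 u r \<longrightarrow> (\<exists>g. reachable F0 F1 g \<and> snd (fst g) = r))"
      by (rule less.hyps[OF _ R' pw less.prems(3)]) (use w0 a less.prems(4,5) in auto)
    have C: "\<forall>u v r. w0 = u @ v \<longrightarrow> path (trans F0) p0 u r \<longrightarrow> (\<exists>g. reachable F0 F1 g \<and> fst (fst g) = r)"
      unfolding w0 by (rule concl_step[where Q="\<lambda>r. \<exists>g. reachable F0 F1 g \<and> fst (fst g) = r", OF _ Q0 tr]) (use IH sr0 in \<open>auto simp: sr_machine_def\<close>)
    show ?thesis using IH C w0 by auto
  next
    case NS0: False
    show ?thesis
    proof (cases "\<exists>b w1'. w1 = Send b # w1'")
      case True
      then obtain b w1' where w1: "w1 = Send b # w1'" by blast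
      from less.prems(3) w1 obtain p1' where tr: "(p1, Send b, p1') \<in> trans F1" and pw: "path (trans F1) p1' w1' q1"
        by (auto simp: path_Cons_iff)
      have b: "b \<in> Mb" "b \<notin> Ma" using tr T1 disj by (auto simp: alphabet_def)
      have R': "reachable F0 F1 ((p0, p1'), (xa, xb @ [b]))" by (rule reach_step[OF R gstep.send1[OF tr]])
      have IH: "(\<forall>u v r. w0 = u @ v \<longrightarrow> path (trans F0) p0 u r \<longrightarrow> (\<exists>g. reachable F0 F1 g \<and> fst (fst g) = r)) \<and>
      (\<forall>u v r. w1' = u @ v \<longrightarrow> path (trans F1) p1' u r \<longrightarrow> (\<exists>g. reachable F0 F1 g \<and> snd (fst g) = r))"
        by (rule less.hyps[OF _ R' less.prems(2) pw]) (use w1 b less.prems(4,5) in auto)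
      have C: "\<forall>u v r. w1 = u @ v \<longrightarrow> path (trans F1) p1 u r \<longrightarrow> (\<exists>g. reachable F0 F1 g \<and> snd (fst g) = r)"
      unfolding w1 by (rule concl_step[where Q="\<lambda>r. \<exists>g. reachable F0 F1 g \<and> snd (fst g) = r", OF _ Q1 tr]) (use IH sr1 in \<open>auto simp: sr_machine_def\<close>)
    show ?thesis using IH C w1 by auto
    next
      case NS1: False
      show ?thesis
      proof (cases "\<exists>b w0'. w0 = Recv b # w0' \<and> xb \<noteq> []")
        case True
        then obtain b w0' where w0: "w0 = Recv b # w0'" and xbne: "xb \<noteq> []" by blast
        from less.prems(2) w0 obtain p0' where tr: "(p0, Recv b, p0') \<in> trans F0" and pw: "path (trans F0) p0' w0' q0"
          by (auto simp: path_Cons_iff)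
        have b: "b \<in> Mb" "b \<notin> Ma" using tr T0 disj by (auto simp: alphabet_def)
        obtain xb' where xb: "xb = b # xb'" "xb' @ proj Mb w1 = proj Mb w0'"
          using xbne less.prems(5) w0 b by (cases xb) auto
        have R': "reachable F0 F1 ((p0', p1), (xa, xb'))"
          by (rule reach_step[OF R[unfolded xb(1)] gstep.recv0[OF tr]])
        have IH: "(\<forall>u v r. w0' = u @ v \<longrightarrow> path (trans F0) p0' u r \<longrightarrow> (\<exists>g. reachable F0 F1 g \<and> fst (fst g) = r)) \<and>
        (\<forall>u v r. w1 = u @ v \<longrightarrow> path (trans F1) p1 u r \<longrightarrow> (\<exists>g. reachable F0 F1 g \<and> snd (fst g) = r))"
          by (rule less.hyps[OF _ R' pw less.prems(3)]) (use w0 b xb less.prems(4) in auto)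
        have C: "\<forall>u v r. w0 = u @ v \<longrightarrow> path (trans F0) p0 u r \<longrightarrow> (\<exists>g. reachable F0 F1 g \<and> fst (fst g) = r)"
      unfolding w0 by (rule concl_step[where Q="\<lambda>r. \<exists>g. reachable F0 F1 g \<and> fst (fst g) = r", OF _ Q0 tr]) (use IH sr0 in \<open>auto simp: sr_machine_def\<close>)
    show ?thesis using IH C w0 by auto
      next
        case NR0: False
        show ?thesis
        proof (cases "\<exists>a w1'. w1 = Recv a # w1' \<and> xa \<noteq> []")
          case True
          then obtain a w1' where w1: "w1 = Recv a # w1'" and xane: "xa \<noteq> []" by blast
          from less.prems(3) w1 obtain p1' where tr: "(p1, Recv a, p1') \<in> trans F1" and pw: "path (trans F1) p1' w1' q1"
            by (auto simp: path_Cons_iff)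
          have a: "a \<in> Ma" "a \<notin> Mb" using tr T1 disj by (auto simp: alphabet_def)
          obtain xa' where xa: "xa = a # xa'" "xa' @ proj Ma w0 = proj Ma w1'"
            using xane less.prems(4) w1 a by (cases xa) auto
          have R': "reachable F0 F1 ((p0, p1'), (xa', xb))"
            by (rule reach_step[OF R[unfolded xa(1)] gstep.recv1[OF tr]])
          have IH: "(\<forall>u v r. w0 = u @ v \<longrightarrow> path (trans F0) p0 u r \<longrightarrow> (\<exists>g. reachable F0 F1 g \<and> fst (fst g) = r)) \<and>
          (\<forall>u v r. w1' = u @ v \<longrightarrow> path (trans F1) p1' u r \<longrightarrow> (\<exists>g. reachable F0 F1 g \<and> snd (fst g) = r))"
            by (rule less.hyps[OF _ R' less.prems(2) pw]) (use w1 a xa less.prems(5) in auto)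
          have C: "\<forall>u v r. w1 = u @ v \<longrightarrow> path (trans F1) p1 u r \<longrightarrow> (\<exists>g. reachable F0 F1 g \<and> snd (fst g) = r)"
      unfolding w1 by (rule concl_step[where Q="\<lambda>r. \<exists>g. reachable F0 F1 g \<and> snd (fst g) = r", OF _ Q1 tr]) (use IH sr1 in \<open>auto simp: sr_machine_def\<close>)
    show ?thesis using IH C w1 by auto
        next
          case NR1: False
          have c0: "w0 = [] \<or> (\<exists>b w0'. w0 = Recv b # w0') \<and> xb = []"
            using NS0 NR0 by (metis act.exhaust list.exhaust)
          have c1: "w1 = [] \<or> (\<exists>a w1'. w1 = Recv a # w1') \<and> xa = []"
            using NS1 NR1 by (metis act.exhaust list.exhaust)
          show ?thesis
          proof (cases "w0 = []")
            case True
            show ?thesis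
            proof (cases "w1 = []")
              case True
              then show ?thesis using \<open>w0 = []\<close> Q0 Q1 by (simp add: path_Nil_iff)
            next
              case False
              then obtain a w1' where "w1 = Recv a # w1'" "xa = []" using c1 by blast
              moreover have "a \<in> Ma" using less.prems(3) T1 calculation(1)
                by (auto simp: path_Cons_iff alphabet_def)
              ultimately show ?thesis using less.prems(4) \<open>w0 = []\<close> by simp
            qed
          next
            case False
            then obtain b w0' where w0: "w0 = Recv b # w0'" "xb = []" using c0 by blast
            have bM: "b \<in> Mb" using less.prems(2) T0 w0(1)
              by (auto simp: path_Cons_iff alphabet_def)
            show ?thesis
            proof (cases "w1 = []")
              case True
              then show ?thesis using less.prems(5) w0 bM by simp
            next
              case False
              then obtain a w1' where w1: "w1 = Recv a # w1'" "xa = []" using c1 by blast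
              from less.prems(2) w0 obtain p0' where tr0: "(p0, Recv b, p0') \<in> trans F0"
                by (auto simp: path_Cons_iff)
              from less.prems(3) w1 obtain p1' where tr1: "(p1, Recv a, p1') \<in> trans F1"
                by (auto simp: path_Cons_iff)
              have "p0 \<in> states F0" using tr0 T0 by auto
              moreover have "\<not> send_state F0 p0" using tr0 by (auto simp: send_state_def)
              ultimately have rs0: "receive_state F0 p0" using sr_sr[OF sr0] by blast
              have "p1 \<in> states F1" using tr1 T1 by auto
              moreover have "\<not> send_state F1 p1" using tr1 by (auto simp: send_state_def)
              ultimately have rs1: "receive_state F1 p1" using sr_sr[OF sr1] by blast
              have "deadlocked F0 F1 ((p0, p1), (xa, xb))"
                using rs0 rs1 w0(2) w1(2) by (simp add: deadlocked_def)
              then show ?thesis using df R by (auto simp: deadlock_free_def)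
            qed
          qed
        qed
      qed
    qed
  qed
qed



lemma send_run0: "path (trans F0) p w q \<Longrightarrow> \<forall>e\<in>set w. \<exists>b. e = Send b \<Longrightarrow>
   (gstep F0 F1)\<^sup>*\<^sup>* ((p, p1), (xa, xb)) ((q, p1), (xa @ map msg w, xb))"
proof (induction arbitrary: xa rule: path.induct)
  case (path_nil p)
  then show ?case by simp
next
  case (path_cons p e r w q)
  then obtain b where e: "e = Send b" by auto
  have "gstep F0 F1 ((p, p1), (xa, xb)) ((r, p1), (xa @ [b], xb))"
    using path_cons.hyps(1) e by (auto intro: gstep.send0)
  moreover have "(gstep F0 F1)\<^sup>*\<^sup>* ((r, p1), (xa @ [b], xb)) ((q, p1), ((xa @ [b]) @ map msg w, xb))"
    by (rule path_cons.IH) (use path_cons.prems in simp)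
  ultimately show ?case using e by (auto intro: converse_rtranclp_into_rtranclp)
qed

lemma send_run1: "path (trans F1) p w q \<Longrightarrow> \<forall>e\<in>set w. \<exists>b. e = Send b \<Longrightarrow>
   (gstep F0 F1)\<^sup>*\<^sup>* ((p0, p), (xa, xb)) ((p0, q), (xa, xb @ map msg w))"
proof (induction arbitrary: xb rule: path.induct)
  case (path_nil p)
  then show ?case by simp
next
  case (path_cons p e r w q)
  then obtain b where e: "e = Send b" by auto
  have "gstep F0 F1 ((p0, p), (xa, xb)) ((p0, r), (xa, xb @ [b]))"
    using path_cons.hyps(1) e by (auto intro: gstep.send1)
  moreover have "(gstep F0 F1)\<^sup>*\<^sup>* ((p0, r), (xa, xb @ [b])) ((p0, q), (xa, (xb @ [b]) @ map msg w))"
    by (rule path_cons.IH) (use path_cons.prems in simp)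
  ultimately show ?case using e by (auto intro: converse_rtranclp_into_rtranclp)
qed

lemma len_rep: "length (map msg (concat (replicate n c))) = n * length c"
  by (induction n) auto

theorem theorem6p3:
  fixes Ma Mb :: "'m set" and F0 :: "('s0, 'm) fsm" and F1 :: "('s1, 'm) fsm"
  assumes "sr_pair Ma Mb F0 F1"
    and "affine Ma Mb F0 F1"
    and "deadlock_free F0 F1"
  shows "bounded_channel F0 F1 \<longleftrightarrow> \<not> has_send_cycle F0 \<and> \<not> has_send_cycle F1"
proof -
  note sp = assms(1)
  have sr0: "sr_machine Ma Mb F0" and sr1: "sr_machine Mb Ma F1" and disj: "Ma \<inter> Mb = {}"
    using sp by (auto simp: sr_pair_def)
  have disj': "Mb \<inter> Ma = {}" using disj by blast
  have T0: "trans F0 \<subseteq> states F0 \<times> alphabet Ma Mb \<times> states F0" by (rule sr_trans[OF sr0])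
  have T1: "trans F1 \<subseteq> states F1 \<times> alphabet Mb Ma \<times> states F1" by (rule sr_trans[OF sr1])
  have Z: "Zset Ma Mb F0 = Zset Ma Mb F1" using assms(2) by (simp add: affine_def)
  have Z01: "\<And>w. path (trans F0) (init F0) w (init F0) \<Longrightarrow>
        \<exists>z. path (trans F1) (init F1) z (init F1) \<and> proj Ma z = proj Ma w \<and> proj Mb z = proj Mb w"
  proof -
    fix w assume "path (trans F0) (init F0) w (init F0)"
    then have "(proj Ma w, proj Mb w) \<in> Zset Ma Mb F0" by (auto simp: Zset_def)
    then have "(proj Ma w, proj Mb w) \<in> Zset Ma Mb F1" using Z by simp
    then show "\<exists>z. path (trans F1) (init F1) z (init F1) \<and> proj Ma z = proj Ma w \<and> proj Mb z = proj Mb w"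
      by (auto simp: Zset_def)
  qed
  have Z10: "\<And>w. path (trans F1) (init F1) w (init F1) \<Longrightarrow>
        \<exists>z. path (trans F0) (init F0) z (init F0) \<and> proj Ma z = proj Ma w \<and> proj Mb z = proj Mb w"
  proof -
    fix w assume "path (trans F1) (init F1) w (init F1)"
    then have "(proj Ma w, proj Mb w) \<in> Zset Ma Mb F1" by (auto simp: Zset_def)
    then have "(proj Ma w, proj Mb w) \<in> Zset Ma Mb F0" using Z by simp
    then show "\<exists>z. path (trans F0) (init F0) z (init F0) \<and> proj Ma z = proj Ma w \<and> proj Mb z = proj Mb w"
      by (auto simp: Zset_def)
  qed
  have Z01': "\<And>w. path (trans F0) (init F0) w (init F0) \<Longrightarrow>
        \<exists>z. path (trans F1) (init F1) z (init F1) \<and> proj Mb z = proj Mb w \<and> proj Ma z = proj Ma w"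
    using Z01 by blast
  have Z10': "\<And>w. path (trans F1) (init F1) w (init F1) \<Longrightarrow>
        \<exists>z. path (trans F0) (init F0) z (init F0) \<and> proj Mb z = proj Mb w \<and> proj Ma z = proj Ma w"
    using Z10 by blast
  show ?thesis
  proof
    assume bc: "bounded_channel F0 F1"
    then obtain B where B: "\<And>p xa xb. reachable F0 F1 (p, (xa, xb)) \<Longrightarrow> length xa + length xb \<le> B"
      by (auto simp: bounded_channel_def)
    have R0: "reachable F0 F1 ((init F0, init F1), ([], []))" by (rule reach_init)
    show "\<not> has_send_cycle F0 \<and> \<not> has_send_cycle F1"
    proof (intro conjI notI)
      assume "has_send_cycle F0"
      then obtain p c where c: "c \<noteq> []" "path (trans F0) p c p" "\<forall>e\<in>set c. \<exists>b. e = Send b"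
        by (auto simp: has_send_cycle_def)
      have pK: "p \<in> states F0" using path_src[OF c(2) c(1) T0] .
      obtain x where px: "path (trans F0) (init F0) x p" using sr_conn[OF sr0 sr_init[OF sr0] pK] by blast
      obtain y where py: "path (trans F0) p y (init F0)" using sr_conn[OF sr0 pK sr_init[OF sr0]] by blast
      have loop: "path (trans F0) (init F0) (x @ y) (init F0)" using px py by (auto simp: path_append_iff)
      obtain z where z: "path (trans F1) (init F1) z (init F1)" "proj Ma z = proj Ma (x @ y)" "proj Mb z = proj Mb (x @ y)"
        using Z01[OF loop] by blast
      have "\<forall>u v r. x @ y = u @ v \<longrightarrow> path (trans F0) (init F0) u r \<longrightarrow> (\<exists>g. reachable F0 F1 g \<and> fst (fst g) = r)"
        using coexec[OF sp assms(3) R0 loop z(1)] z(2,3) by simp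
      then obtain g where g: "reachable F0 F1 g" "fst (fst g) = p" using px by blast
      obtain p1 xa xb where gg: "g = ((p, p1), (xa, xb))" using g(2) by (cases g) auto
      define w where "w = concat (replicate (Suc B) c)"
      have pw: "path (trans F0) p w p" unfolding w_def by (rule path_rep[OF c(2)])
      have sw: "\<forall>e\<in>set w. \<exists>b. e = Send b" using c(3) unfolding w_def by auto
      have "reachable F0 F1 ((p, p1), (xa @ map msg w, xb))"
        using reach_steps[OF g(1)[unfolded gg] send_run0[OF pw sw]] .
      then have "length (xa @ map msg w) + length xb \<le> B" by (rule B)
      moreover have "length (map msg w) \<ge> Suc B"
      proof -
        have "1 \<le> length c" using c(1) by (cases c) auto
        then have "Suc B * 1 \<le> Suc B * length c" by (rule mult_le_mono2)
        then show ?thesis unfolding w_def len_rep by simp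
      qed
      ultimately show False by simp
    next
      assume "has_send_cycle F1"
      then obtain p c where c: "c \<noteq> []" "path (trans F1) p c p" "\<forall>e\<in>set c. \<exists>b. e = Send b"
        by (auto simp: has_send_cycle_def)
      have pK: "p \<in> states F1" using path_src[OF c(2) c(1) T1] .
      obtain x where px: "path (trans F1) (init F1) x p" using sr_conn[OF sr1 sr_init[OF sr1] pK] by blast
      obtain y where py: "path (trans F1) p y (init F1)" using sr_conn[OF sr1 pK sr_init[OF sr1]] by blast
      have loop: "path (trans F1) (init F1) (x @ y) (init F1)" using px py by (auto simp: path_append_iff)
      obtain z where z: "path (trans F0) (init F0) z (init F0)" "proj Ma z = proj Ma (x @ y)" "proj Mb z = proj Mb (x @ y)"
        using Z10[OF loop] by blast
      have "\<forall>u v r. x @ y = u @ v \<longrightarrow> path (trans F1) (init F1) u r \<longrightarrow> (\<exists>g. reachable F0 F1 g \<and> snd (fst g) = r)"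
        using coexec[OF sp assms(3) R0 z(1) loop] z(2,3) by simp
      then obtain g where g: "reachable F0 F1 g" "snd (fst g) = p" using px by blast
      obtain p0 xa xb where gg: "g = ((p0, p), (xa, xb))" using g(2) by (cases g) auto
      define w where "w = concat (replicate (Suc B) c)"
      have pw: "path (trans F1) p w p" unfolding w_def by (rule path_rep[OF c(2)])
      have sw: "\<forall>e\<in>set w. \<exists>b. e = Send b" using c(3) unfolding w_def by auto
      have "reachable F0 F1 ((p0, p), (xa, xb @ map msg w))"
        using reach_steps[OF g(1)[unfolded gg] send_run1[OF pw sw]] .
      then have "length xa + length (xb @ map msg w) \<le> B" by (rule B)
      moreover have "length (map msg w) \<ge> Suc B"
      proof -
        have "1 \<le> length c" using c(1) by (cases c) auto
        then have "Suc B * 1 \<le> Suc B * length c" by (rule mult_le_mono2)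
        then show ?thesis unfolding w_def len_rep by simp
      qed
      ultimately show False by simp
    qed
  next
    assume nsc: "\<not> has_send_cycle F0 \<and> \<not> has_send_cycle F1"
    obtain Ca where Ca: "\<forall>uA pA uB pB x y. path (trans F0) (init F0) uA pA \<longrightarrow> path (trans F1) (init F1) uB pB \<longrightarrow>
       proj Ma uA = proj Ma uB @ x \<longrightarrow> proj Mb uB = proj Mb uA @ y \<longrightarrow> length x \<le> Ca"
      using lag_bound[OF sr0 sr1 disj Z01 Z10] nsc by blast
    obtain Cb where Cb: "\<forall>uA pA uB pB x y. path (trans F1) (init F1) uA pA \<longrightarrow> path (trans F0) (init F0) uB pB \<longrightarrow>
       proj Mb uA = proj Mb uB @ x \<longrightarrow> proj Ma uB = proj Ma uA @ y \<longrightarrow> length x \<le> Cb"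
      using lag_bound[OF sr1 sr0 disj' Z10' Z01'] nsc by blast
    show "bounded_channel F0 F1"
      unfolding bounded_channel_def
    proof (intro exI[of _ "Ca + Cb"] allI impI)
      fix p xa xb assume r: "reachable F0 F1 (p, (xa, xb))"
      obtain p0 p1 where pp: "p = (p0, p1)" by (cases p)
      obtain u0 u1 where u: "path (trans F0) (init F0) u0 p0" "path (trans F1) (init F1) u1 p1"
        "proj Ma u0 = proj Ma u1 @ xa" "proj Mb u1 = proj Mb u0 @ xb"
        using hist[OF sp r] pp by auto
      have "length xa \<le> Ca" using Ca[rule_format, OF u(1) u(2) u(3) u(4)] .
      moreover have "length xb \<le> Cb" using Cb[rule_format, OF u(2) u(1) u(4) u(3)] .
      ultimately show "length xa + length xb \<le> Ca + Cb" by simp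
    qed
  qed
qed

end
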